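(* For each $n\ge1$, $h\in\mathcal H_n$ and $\psi\in C^\alpha_{\mathrm{loc}}(\widehat\Delta)$ we have $(\xi\psi_n)\circ h\in C^\alpha_{\mathrm{loc}}(\Delta)$. More precisely, there exists $C>0$ such that $\|(\xi\psi_n)\circ h\|_\alpha\le C\|\psi\|_\alpha$ for all $\psi\in C^\alpha_{\mathrm{loc}}(\widehat\Delta)$, $h\in\mathcal H_n$ and $n\ge1$.
   Context: $\Delta=[0,1]$, $\alpha\in(0,1]$, $\mathcal P$ countable Lebesgue-mod-0 partition into open intervals, $F:\Delta\to\Delta$ full-branch, $C^{1+\alpha}$ on each element, with inverse branches $\mathcal H,\mathcal H_n$ of $F,F^n$ satisfying $|h'|_\infty\le C_0\rho^n$ ($h\in\mathcal H_n$) and $|\log|h'||_\alpha\le C_0$ ($h\in\mathcal H$), $\rho\in(0,1)$. $\xi$ is the ($\alpha$-Hölder) density of the absolutely continuous $F$-invariant probability $\mu_F$ with respect to Lebesgue. $\Omega\subset\mathbb R^N$ compact Riemannian manifold, $\widehat\Delta=\Delta\times\Omega$ with distance $|x_1-x_2|+|y_1-y_2|$, $\widehat F(x,y)=(F(x),G(x,y))$ with $G$ of class $C^{1+\alpha}$ and $|\widehat F^n(x,y_1)-\widehat F^n(x,y_2)|\le C_0\gamma^n|y_1-y_2|$ ($\gamma\in(0,1)$); write $\widehat F^n(x,y)=(F^n x,G_n(x,y))$. Fix $0\in\Omega$ and set $\psi_n(x)=\psi(\widehat F^n(x,0))$. $C^\alpha_{\mathrm{loc}}(\widehat\Delta)$: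 bounded $\psi$ with $\|\psi\|_\alpha=|\psi|_\infty+\sup_{h\in\mathcal H}\sup\frac{|\psi(hx_1,y_1)-\psi(hx_2,y_2)|}{|x_1-x_2|^\alpha+|y_1-y_2|}<\infty$. $C^\alpha_{\mathrm{loc}}(\Delta)$: bounded $\phi$ with $\|\phi\|_\alpha=|\phi|_\infty+\sup_{h\in\mathcal H}\sup_{x\ne y}|\phi(hx)-\phi(hy)|/|x-y|^\alpha<\infty$. *)

theory Defs
  imports "HOL-Probability.Probability"
begin

definition inv_branches :: "(real \<Rightarrow> real) \<Rightarrow> real set set \<Rightarrow> (real \<Rightarrow> real) set" where
  "inv_branches F P = {h. \<exists>a\<in>P. (\<forall>x\<in>{0<..<1}. h x \<in> a \<and> F (h x) = x) \<and> h ` {0<..<1} = a}"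

primrec inv_branches_n :: "(real \<Rightarrow> real) \<Rightarrow> real set set \<Rightarrow> nat \<Rightarrow> (real \<Rightarrow> real) set" where
  "inv_branches_n F P 0 = {id}"
| "inv_branches_n F P (Suc n) = {h \<circ> g | h g. h \<in> inv_branches F P \<and> g \<in> inv_branches_n F P n}"

definition Fhat :: "(real \<Rightarrow> real) \<Rightarrow> (real \<times> 'b \<Rightarrow> 'b) \<Rightarrow> real \<times> 'b \<Rightarrow> real \<times> 'b" where
  "Fhat F G = (\<lambda>p. (F (fst p), G p))"

definition dhat :: "real \<times> 'b::real_normed_vector \<Rightarrow> real \<times> 'b \<Rightarrow> real" where
  "dhat p q = \<bar>fst p - fst q\<bar> + norm (snd p - snd q)"

definition psi_n :: "(real \<Rightarrow> real) \<Rightarrow> (real \<times> 'b \<Rightarrow> 'b) \<Rightarrow> 'b \<Rightarrow> (real \<times> 'b \<Rightarrow> real) \<Rightarrow> nat \<Rightarrow> real \<Rightarrow> real" where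
  "psi_n F G y0 \<psi> n x = \<psi> ((Fhat F G ^^ n) (x, y0))"

definition hat_sup_set :: "'b set \<Rightarrow> (real \<times> 'b \<Rightarrow> real) \<Rightarrow> real set" where
  "hat_sup_set \<Omega> \<psi> = {\<bar>\<psi> p\<bar> | p. p \<in> {0<..<1} \<times> \<Omega>}"

definition hat_holder_set :: "real \<Rightarrow> (real \<Rightarrow> real) \<Rightarrow> real set set \<Rightarrow> 'b::real_normed_vector set
    \<Rightarrow> (real \<times> 'b \<Rightarrow> real) \<Rightarrow> real set" where
  "hat_holder_set \<alpha> F P \<Omega> \<psi> =
     {\<bar>\<psi> (h x1, y1) - \<psi> (h x2, y2)\<bar> / (\<bar>x1 - x2\<bar> powr \<alpha> + norm (y1 - y2)) | h x1 y1 x2 y2.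
        h \<in> inv_branches F P \<and> x1 \<in> {0<..<1} \<and> x2 \<in> {0<..<1} \<and> y1 \<in> \<Omega> \<and> y2 \<in> \<Omega>
        \<and> (x1, y1) \<noteq> (x2, y2)}"

definition in_Cloc_hat :: "real \<Rightarrow> (real \<Rightarrow> real) \<Rightarrow> real set set \<Rightarrow> 'b::real_normed_vector set
    \<Rightarrow> (real \<times> 'b \<Rightarrow> real) \<Rightarrow> bool" where
  "in_Cloc_hat \<alpha> F P \<Omega> \<psi> \<longleftrightarrow> bdd_above (hat_sup_set \<Omega> \<psi>) \<and> bdd_above (hat_holder_set \<alpha> F P \<Omega> \<psi>)"

definition norm_Cloc_hat :: "real \<Rightarrow> (real \<Rightarrow> real) \<Rightarrow> real set set \<Rightarrow> 'b::real_normed_vector set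
    \<Rightarrow> (real \<times> 'b \<Rightarrow> real) \<Rightarrow> real" where
  "norm_Cloc_hat \<alpha> F P \<Omega> \<psi> = Sup (hat_sup_set \<Omega> \<psi>) + Sup (hat_holder_set \<alpha> F P \<Omega> \<psi>)"

definition sup_set :: "(real \<Rightarrow> real) \<Rightarrow> real set" where
  "sup_set \<phi> = {\<bar>\<phi> x\<bar> | x. x \<in> {0<..<1}}"

definition holder_set :: "real \<Rightarrow> (real \<Rightarrow> real) \<Rightarrow> real set set \<Rightarrow> (real \<Rightarrow> real) \<Rightarrow> real set" where
  "holder_set \<alpha> F P \<phi> =
     {\<bar>\<phi> (h x) - \<phi> (h y)\<bar> / \<bar>x - y\<bar> powr \<alpha> | h x y.
        h \<in> inv_branches F P \<and> x \<in> {0<..<1} \<and> y \<in> {0<..<1} \<and> x \<noteq> y}"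

definition in_Cloc :: "real \<Rightarrow> (real \<Rightarrow> real) \<Rightarrow> real set set \<Rightarrow> (real \<Rightarrow> real) \<Rightarrow> bool" where
  "in_Cloc \<alpha> F P \<phi> \<longleftrightarrow> bdd_above (sup_set \<phi>) \<and> bdd_above (holder_set \<alpha> F P \<phi>)"

definition norm_Cloc :: "real \<Rightarrow> (real \<Rightarrow> real) \<Rightarrow> real set set \<Rightarrow> (real \<Rightarrow> real) \<Rightarrow> real" where
  "norm_Cloc \<alpha> F P \<phi> = Sup (sup_set \<phi>) + Sup (holder_set \<alpha> F P \<phi>)"

end

theory Submission
  imports Defs
begin

lemma lip_deriv:
  fixes h :: "real \<Rightarrow> real"
  assumes "\<forall>x\<in>{0<..<1}. h differentiable (at x) \<and> \<bar>deriv h x\<bar> \<le> c"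
    and "x \<in> {0<..<1}" "y \<in> {0<..<1}"
  shows "\<bar>h x - h y\<bar> \<le> c * \<bar>x - y\<bar>"
proof -
  have "norm (h x - h y) \<le> c * norm (x - y)"
  proof (rule differentiable_bound[where S="{0<..<1}" and f'="\<lambda>x s. deriv h x * s"])
    show "convex {0<..<(1::real)}" by simp
    fix z :: real assume z: "z \<in> {0<..<1}"
    then have "(h has_field_derivative deriv h z) (at z)"
      using assms(1) DERIV_deriv_iff_real_differentiable by blast
    then show "(h has_derivative (\<lambda>s. deriv h z * s)) (at z within {0<..<1})"
      by (simp add: has_derivative_at_withinI has_field_derivative_def)
    show "onorm (\<lambda>s. deriv h z * s) \<le> c"
    proof (rule onorm_le)
      fix s :: real show "norm (deriv h z * s) \<le> c * norm s"
        using assms(1) z by (simp add: abs_mult mult_right_mono)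
    qed
  qed (use assms in auto)
  then show ?thesis by simp
qed

lemma Hn_maps:
  assumes PI: "\<forall>a\<in>P. \<exists>l u. 0 \<le> l \<and> l < u \<and> u \<le> 1 \<and> a = {l<..<u}"
  shows "h \<in> inv_branches_n F P n \<Longrightarrow> z \<in> {0<..<1} \<Longrightarrow> h z \<in> {0<..<1}"
proof (induction n arbitrary: h)
  case 0 then show ?case by simp
next
  case (Suc n)
  then obtain h1 g where h: "h = h1 \<circ> g" "h1 \<in> inv_branches F P" "g \<in> inv_branches_n F P n" by auto
  then have gz: "g z \<in> {0<..<1}" using Suc by blast
  from h(2) obtain a where a: "a \<in> P" "\<forall>x\<in>{0<..<1}. h1 x \<in> a" unfolding inv_branches_def by blast
  then have "h1 (g z) \<in> a" using gz by blast
  moreover from PI a(1) have "a \<subseteq> {0<..<1}" by force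
  ultimately show ?case using h(1) by auto
qed

lemma Hn_tail:
  assumes PI: "\<forall>a\<in>P. \<exists>l u. 0 \<le> l \<and> l < u \<and> u \<le> 1 \<and> a = {l<..<u}"
  shows "h \<in> inv_branches_n F P n \<Longrightarrow> k \<le> n \<Longrightarrow>
     \<exists>t\<in>inv_branches_n F P (n-k). \<forall>z\<in>{0<..<1}. (F^^k) (h z) = t z"
proof (induction n arbitrary: h k)
  case 0 then show ?case by auto
next
  case (Suc n)
  then obtain h1 g where h: "h = h1 \<circ> g" "h1 \<in> inv_branches F P" "g \<in> inv_branches_n F P n" by auto
  show ?case
  proof (cases k)
    case 0 then show ?thesis using Suc by auto
  next
    case (Suc k')
    with Suc.prems have "k' \<le> n" by simp
    with Suc.IH h(3) obtain t where t: "t \<in> inv_branches_n F P (n-k')"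
      "\<forall>z\<in>{0<..<1}. (F^^k') (g z) = t z" by blast
    have "(F^^k) (h z) = t z" if z: "z \<in> {0<..<1}" for z
    proof -
      have "g z \<in> {0<..<1}" using Hn_maps[OF PI h(3) z] .
      then have "F (h1 (g z)) = g z"
        using h(2) unfolding inv_branches_def by blast
      moreover have "(F^^k) (h z) = (F^^k') (F (h1 (g z)))"
        by (simp only: Suc funpow_Suc_right h(1) comp_def)
      ultimately show ?thesis using t z by simp
    qed
    then show ?thesis using t Suc by auto
  qed
qed

lemma fst_iter: "fst ((Fhat F G ^^ k) p) = (F^^k) (fst p)"
  by (induction k) (auto simp: Fhat_def)

lemma iter_in:
  assumes FM: "\<forall>x\<in>{0..1}. F x \<in> {0..1}" and GM: "\<forall>p\<in>{0..1} \<times> \<Omega>. G p \<in> \<Omega>"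
  shows "p \<in> {0..1} \<times> \<Omega> \<Longrightarrow> (Fhat F G ^^ k) p \<in> {0..1} \<times> \<Omega>"
proof (induction k)
  case 0 then show ?case by simp
next
  case (Suc k)
  obtain a b where ab: "(Fhat F G ^^ k) p = (a, b)" by (cases "(Fhat F G ^^ k) p")
  then have "a \<in> {0..1}" "b \<in> \<Omega>" using Suc by auto
  then show ?case using FM GM ab by (auto simp: Fhat_def)
qed

lemma telescope:
  fixes f :: "nat \<Rightarrow> 'a::real_normed_vector"
  shows "norm (f 0 - f n) \<le> (\<Sum>k<n. norm (f k - f (Suc k)))"
proof (induction n)
  case 0 then show ?case by simp
next
  case (Suc n)
  have "norm (f 0 - f (Suc n)) \<le> norm (f 0 - f n) + norm (f n - f (Suc n))"
    using norm_triangle_ineq[of "f 0 - f n" "f n - f (Suc n)"] by simp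
  then show ?case using Suc by simp
qed

lemma powr_small_ge:
  fixes d \<alpha> :: real
  assumes "0 \<le> d" "d \<le> 1" "0 < \<alpha>" "\<alpha> \<le> 1"
  shows "d \<le> d powr \<alpha>"
proof (cases "d = 0")
  case True then show ?thesis by simp
next
  case False
  then have "d powr 1 \<le> d powr \<alpha>" using assms
    by (intro powr_mono') auto
  then show ?thesis using False assms by simp
qed

lemma powr_le_1plus:
  fixes d \<alpha> :: real
  assumes "0 \<le> d" "0 < \<alpha>" "\<alpha> \<le> 1"
  shows "d powr \<alpha> \<le> 1 + d"
proof (cases "d \<le> 1")
  case True then show ?thesis using powr_le1[of \<alpha> d] assms by simp
next
  case False
  then have "d powr \<alpha> \<le> d powr 1" using assms by (intro powr_mono) auto
  then show ?thesis using False by simp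
qed

lemma G_lip:
  fixes G :: "real \<times> 'b::real_normed_vector \<Rightarrow> 'b" and G' :: "real \<times> 'b \<Rightarrow> (real \<times> 'b) \<Rightarrow>\<^sub>L 'b"
  assumes der: "\<forall>p\<in>{0..1} \<times> \<Omega>. (G has_derivative blinfun_apply (G' p)) (at p within {0..1} \<times> \<Omega>)"
    and bd: "\<forall>p\<in>{0..1} \<times> \<Omega>. norm (G' p) \<le> L"
    and w: "w \<in> \<Omega>" and s: "s \<in> {0..1}" and t: "t \<in> {0..1}"
  shows "norm (G (s, w) - G (t, w)) \<le> L * \<bar>s - t\<bar>"
proof -
  have "norm (G (s, w) - G (t, w)) \<le> L * norm (s - t)"
  proof (rule differentiable_bound[where S="{0..1}" and f="\<lambda>r. G (r, w)"
        and f'="\<lambda>r u. blinfun_apply (G' (r, w)) (u, 0)"])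
    fix r :: real assume r: "r \<in> {0..1}"
    have fd: "((\<lambda>r. (r, w)) has_derivative (\<lambda>u. (u, 0))) (at r within {0..1})"
      by (auto intro!: derivative_eq_intros)
    show "((\<lambda>r. G (r, w)) has_derivative (\<lambda>u. blinfun_apply (G' (r, w)) (u, 0))) (at r within {0..1})"
      by (rule has_derivative_in_compose2[where t="{0..1} \<times> \<Omega>" and g=G and g'="\<lambda>p. blinfun_apply (G' p)", OF _ _ r fd])
        (use der w in auto)
    show "onorm (\<lambda>u. blinfun_apply (G' (r, w)) (u, 0)) \<le> L"
    proof (rule onorm_le)
      fix u :: real
      have "norm (blinfun_apply (G' (r, w)) (u, 0)) \<le> norm (G' (r, w)) * norm (u, 0::'b)"
        by (rule norm_blinfun)
      also have "\<dots> \<le> L * norm u"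
        using bd r w by (auto intro!: mult_right_mono simp: norm_Pair)
      finally show "norm (blinfun_apply (G' (r, w)) (u, 0)) \<le> L * norm u" .
    qed
  qed (use s t in auto)
  then show ?thesis by simp
qed

lemma Y_lip:
  fixes G :: "real \<times> 'b::real_normed_vector \<Rightarrow> 'b"
  assumes PI: "\<forall>a\<in>P. \<exists>l u. 0 \<le> l \<and> l < u \<and> u \<le> 1 \<and> a = {l<..<u}"
    and FM: "\<forall>x\<in>{0..1}. F x \<in> {0..1}" and GM: "\<forall>p\<in>{0..1} \<times> \<Omega>. G p \<in> \<Omega>"
    and Glip: "\<forall>w\<in>\<Omega>. \<forall>s\<in>{0..1}. \<forall>t\<in>{0..1}. norm (G (s, w) - G (t, w)) \<le> L * \<bar>s - t\<bar>"
    and L: "0 \<le> L" and C0: "0 < C0" and gamma: "0 < \<gamma>" "\<gamma> < 1" and rho: "0 < \<rho>" "\<rho> < 1"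
    and H_n_contr: "\<forall>n\<ge>1. \<forall>h\<in>inv_branches_n F P n. \<forall>x\<in>{0<..<1}.
                      h differentiable (at x) \<and> \<bar>deriv h x\<bar> \<le> C0 * \<rho> ^ n"
    and G_contr: "\<forall>n x y1 y2. x \<in> {0..1} \<and> y1 \<in> \<Omega> \<and> y2 \<in> \<Omega> \<longrightarrow>
                    dhat ((Fhat F G ^^ n) (x, y1)) ((Fhat F G ^^ n) (x, y2)) \<le> C0 * \<gamma> ^ n * norm (y1 - y2)"
    and y0: "y0 \<in> \<Omega>" and h: "h \<in> inv_branches_n F P n"
    and z1: "z1 \<in> {0<..<1}" and z2: "z2 \<in> {0<..<1}"
  shows "norm (snd ((Fhat F G ^^ n) (h z1, y0)) - snd ((Fhat F G ^^ n) (h z2, y0)))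
           \<le> C0 * L * C0 / (1 - \<gamma>) * \<bar>z1 - z2\<bar>"
proof -
  define Fh where "Fh = Fhat F G"
  define u where "u = h z1"
  define v where "v = h z2"
  have uv: "u \<in> {0<..<1}" "v \<in> {0<..<1}" using Hn_maps[OF PI h] z1 z2 u_def v_def by auto
  define Z where "Z k = snd ((Fh^^(n-k)) ((F^^k) u, snd ((Fh^^k) (v, y0))))" for k
  define d where "d = \<bar>z1 - z2\<bar>"
  have Z0: "Z 0 = snd ((Fh^^n) (u, y0))" by (simp add: Z_def)
  have Zn: "Z n = snd ((Fh^^n) (v, y0))" by (simp add: Z_def)
  have step: "norm (Z k - Z (Suc k)) \<le> C0 * \<gamma> ^ (n - Suc k) * (L * (C0 * d))" if k: "k < n" for k
  proof -
    obtain t where t: "t \<in> inv_branches_n F P (n-k)" "\<forall>z\<in>{0<..<1}. (F^^k) (h z) = t z"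
      using Hn_tail[OF PI h, of k] k by auto
    have "\<forall>x\<in>{0<..<1}. t differentiable (at x) \<and> \<bar>deriv t x\<bar> \<le> C0 * \<rho> ^ (n-k)"
    proof -
      have "n - k \<ge> 1" using k by simp
      then show ?thesis using H_n_contr t(1) by blast
    qed
    moreover have "C0 * \<rho> ^ (n-k) \<le> C0" using C0 rho by (simp add: power_le_one)
    ultimately have tl: "\<forall>x\<in>{0<..<1}. t differentiable (at x) \<and> \<bar>deriv t x\<bar> \<le> C0" by force
    define uk where "uk = (F^^k) u"
    define vk where "vk = (F^^k) v"
    define w where "w = snd ((Fh^^k) (v, y0))"
    have ukt: "uk = t z1" and vkt: "vk = t z2" using t(2) z1 z2 uk_def vk_def u_def v_def by auto
    have ukin: "uk \<in> {0<..<1}" "vk \<in> {0<..<1}" using Hn_maps[OF PI t(1)] z1 z2 ukt vkt by auto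
    have dist: "\<bar>uk - vk\<bar> \<le> C0 * d" using lip_deriv[OF tl z1 z2] ukt vkt d_def by simp
    have pin: "(Fh^^k) (v, y0) \<in> {0..1} \<times> \<Omega>" unfolding Fh_def
      by (rule iter_in[OF FM GM]) (use uv y0 in auto)
    have pv: "(Fh^^k) (v, y0) = (vk, w)"
      using fst_iter[where F=F and G=G and k=k and p="(v, y0)"] unfolding Fh_def vk_def w_def by (simp add: prod_eq_iff)
    have w: "w \<in> \<Omega>" using pin pv by auto
    have nk: "n - k = Suc (n - Suc k)" using k by simp
    have "Z k = snd ((Fh^^(n - Suc k)) (Fh (uk, w)))"
      unfolding Z_def nk uk_def w_def by (simp only: funpow_Suc_right comp_def)
    also have "Fh (uk, w) = (F uk, G (uk, w))" by (simp add: Fh_def Fhat_def)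
    finally have Zk: "Z k = snd ((Fh^^(n - Suc k)) (F uk, G (uk, w)))" .
    have "(Fh^^Suc k) (v, y0) = Fh (vk, w)" using pv by simp
    also have "\<dots> = (F vk, G (vk, w))" by (simp add: Fh_def Fhat_def)
    finally have "snd ((Fh^^Suc k) (v, y0)) = G (vk, w)" by simp
    moreover have "(F^^Suc k) u = F uk" by (simp add: uk_def)
    ultimately have ZSk: "Z (Suc k) = snd ((Fh^^(n - Suc k)) (F uk, G (vk, w)))"
      by (simp add: Z_def)
    have Fuk: "F uk \<in> {0..1}" using FM ukin by auto
    have G1: "G (uk, w) \<in> \<Omega>" "G (vk, w) \<in> \<Omega>" using GM ukin w by auto
    have "norm (Z k - Z (Suc k)) \<le> dhat ((Fh^^(n - Suc k)) (F uk, G (uk, w))) ((Fh^^(n - Suc k)) (F uk, G (vk, w)))"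
      unfolding Zk ZSk dhat_def by simp
    also have "\<dots> \<le> C0 * \<gamma> ^ (n - Suc k) * norm (G (uk, w) - G (vk, w))"
      using G_contr Fuk G1 unfolding Fh_def by blast
    also have "\<dots> \<le> C0 * \<gamma> ^ (n - Suc k) * (L * (C0 * d))"
    proof (rule mult_left_mono)
      have "norm (G (uk, w) - G (vk, w)) \<le> L * \<bar>uk - vk\<bar>" using Glip w ukin by auto
      also have "\<dots> \<le> L * (C0 * d)" using dist L by (rule mult_left_mono)
      finally show "norm (G (uk, w) - G (vk, w)) \<le> L * (C0 * d)" .
      show "0 \<le> C0 * \<gamma> ^ (n - Suc k)" using C0 gamma by simp
    qed
    finally show ?thesis .
  qed
  have "norm (Z 0 - Z n) \<le> (\<Sum>k<n. norm (Z k - Z (Suc k)))" by (rule telescope)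
  also have "\<dots> \<le> (\<Sum>k<n. C0 * \<gamma> ^ (n - Suc k) * (L * (C0 * d)))"
    by (rule sum_mono) (use step in auto)
  also have "\<dots> = C0 * L * C0 * d * (\<Sum>k<n. \<gamma> ^ (n - Suc k))"
    by (simp add: sum_distrib_left mult_ac)
  also have "(\<Sum>k<n. \<gamma> ^ (n - Suc k)) = (\<Sum>k<n. \<gamma> ^ k)"
    by (rule sum.nat_diff_reindex)
  also have "\<dots> = (1 - \<gamma> ^ n) / (1 - \<gamma>)" using gamma by (simp add: sum_gp_strict)
  also have "C0 * L * C0 * d * ((1 - \<gamma> ^ n) / (1 - \<gamma>)) \<le> C0 * L * C0 * d * (1 / (1 - \<gamma>))"
    by (rule mult_left_mono) (use gamma C0 L d_def in \<open>auto simp: divide_right_mono\<close>)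
  finally show ?thesis using Z0 Zn u_def v_def d_def Fh_def by simp
qed

theorem lemma6p19:
  fixes P :: "real set set" and F :: "real \<Rightarrow> real" and \<alpha> \<rho> \<gamma> C0 :: real
    and \<xi> :: "real \<Rightarrow> real" and \<Omega> :: "(real ^ 'N) set"
    and G :: "real \<times> (real ^ 'N) \<Rightarrow> real ^ 'N" and y0 :: "real ^ 'N"
  assumes alpha: "0 < \<alpha>" "\<alpha> \<le> 1"
    and rho: "0 < \<rho>" "\<rho> < 1"
    and gamma: "0 < \<gamma>" "\<gamma> < 1"
    and C0: "0 < C0"
    \<comment> \<open>countable Lebesgue-mod-0 partition of [0,1] into open intervals\<close>
    and P_countable: "countable P"
    and P_intervals: "\<forall>a\<in>P. \<exists>l u. 0 \<le> l \<and> l < u \<and> u \<le> 1 \<and> a = {l<..<u}"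
    and P_disjoint: "pairwise disjnt P"
    and P_full: "{0..1} - \<Union>P \<in> null_sets lborel"
    \<comment> \<open>F is a full-branch map, C^{1+alpha} on each element\<close>
    and F_maps: "\<forall>x\<in>{0..1}. F x \<in> {0..1}"
    and F_full_branch: "\<forall>a\<in>P. bij_betw F a {0<..<1}"
    and F_C1alpha: "\<forall>a\<in>P. (\<forall>x\<in>a. F differentiable (at x))
                      \<and> (\<exists>K. \<forall>x\<in>a. \<forall>y\<in>a. \<bar>deriv F x - deriv F y\<bar> \<le> K * \<bar>x - y\<bar> powr \<alpha>)"
    \<comment> \<open>uniform expansion and bounded distortion\<close>
    and H_n_contr: "\<forall>n\<ge>1. \<forall>h\<in>inv_branches_n F P n. \<forall>x\<in>{0<..<1}.
                      h differentiable (at x) \<and> \<bar>deriv h x\<bar> \<le> C0 * \<rho> ^ n"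
    and H_distortion: "\<forall>h\<in>inv_branches F P. \<forall>x\<in>{0<..<1}. \<forall>y\<in>{0<..<1}.
                      \<bar>ln \<bar>deriv h x\<bar> - ln \<bar>deriv h y\<bar>\<bar> \<le> C0 * \<bar>x - y\<bar> powr \<alpha>"
    \<comment> \<open>xi is an alpha-Hoelder density of the acip mu_F\<close>
    and xi_nonneg: "\<forall>x\<in>{0..1}. 0 \<le> \<xi> x"
    and xi_prob: "prob_space (density lborel (\<lambda>x. ennreal (indicator {0..1} x * \<xi> x)))"
    and xi_meas: "F \<in> measurable (density lborel (\<lambda>x. ennreal (indicator {0..1} x * \<xi> x)))
                                 (density lborel (\<lambda>x. ennreal (indicator {0..1} x * \<xi> x)))"
    and xi_inv: "distr (density lborel (\<lambda>x. ennreal (indicator {0..1} x * \<xi> x)))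
                       (density lborel (\<lambda>x. ennreal (indicator {0..1} x * \<xi> x))) F
                 = density lborel (\<lambda>x. ennreal (indicator {0..1} x * \<xi> x))"
    and xi_holder: "\<exists>K. \<forall>x\<in>{0..1}. \<forall>y\<in>{0..1}. \<bar>\<xi> x - \<xi> y\<bar> \<le> K * \<bar>x - y\<bar> powr \<alpha>"
    \<comment> \<open>the fibre Omega and the fibre map G\<close>
    and Omega_compact: "compact \<Omega>"
    and y0_in: "y0 \<in> \<Omega>"
    and G_maps: "\<forall>p\<in>{0..1} \<times> \<Omega>. G p \<in> \<Omega>"
    and G_C1alpha: "\<exists>G' K. (\<forall>p\<in>{0..1} \<times> \<Omega>.
                         (G has_derivative blinfun_apply (G' p)) (at p within {0..1} \<times> \<Omega>))
                      \<and> (\<forall>p\<in>{0..1} \<times> \<Omega>. \<forall>q\<in>{0..1} \<times> \<Omega>. norm (G' p - G' q) \<le> K * dhat p q powr \<alpha>)"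
    and G_contr: "\<forall>n x y1 y2. x \<in> {0..1} \<and> y1 \<in> \<Omega> \<and> y2 \<in> \<Omega> \<longrightarrow>
                    dhat ((Fhat F G ^^ n) (x, y1)) ((Fhat F G ^^ n) (x, y2)) \<le> C0 * \<gamma> ^ n * norm (y1 - y2)"
  shows "\<exists>C>0. \<forall>\<psi>. in_Cloc_hat \<alpha> F P \<Omega> \<psi> \<longrightarrow>
           (\<forall>n\<ge>1. \<forall>h\<in>inv_branches_n F P n.
              in_Cloc \<alpha> F P (\<lambda>x. \<xi> (h x) * psi_n F G y0 \<psi> n (h x))
              \<and> norm_Cloc \<alpha> F P (\<lambda>x. \<xi> (h x) * psi_n F G y0 \<psi> n (h x)) \<le> C * norm_Cloc_hat \<alpha> F P \<Omega> \<psi>)"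
proof -
  obtain K where K: "\<forall>x\<in>{0..1}. \<forall>y\<in>{0..1}. \<bar>\<xi> x - \<xi> y\<bar> \<le> K * \<bar>x - y\<bar> powr \<alpha>"
    using xi_holder by blast
  define K' where "K' = max K 0"
  define Xi where "Xi = \<bar>\<xi> 0\<bar> + K'"
  have K'0: "0 \<le> K'" by (simp add: K'_def)
  have xi_h: "\<bar>\<xi> x - \<xi> y\<bar> \<le> K' * \<bar>x - y\<bar> powr \<alpha>" if "x \<in> {0..1}" "y \<in> {0..1}" for x y
  proof -
    have "\<bar>\<xi> x - \<xi> y\<bar> \<le> K * \<bar>x - y\<bar> powr \<alpha>" using K that by blast
    also have "\<dots> \<le> K' * \<bar>x - y\<bar> powr \<alpha>" by (rule mult_right_mono) (auto simp: K'_def)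
    finally show ?thesis .
  qed
  have xi_bd: "\<bar>\<xi> x\<bar> \<le> Xi" if "x \<in> {0..1}" for x
  proof -
    have "\<bar>\<xi> x - \<xi> 0\<bar> \<le> K' * \<bar>x - 0\<bar> powr \<alpha>" using xi_h[of x 0] that by simp
    also have "\<dots> \<le> K' * 1" using that alpha K'0 by (intro mult_left_mono powr_le1) auto
    finally show ?thesis unfolding Xi_def by simp
  qed
  have Xi0: "0 \<le> Xi" unfolding Xi_def using K'0 by simp
  obtain G' KG where G'd: "\<forall>p\<in>{0..1} \<times> \<Omega>. (G has_derivative blinfun_apply (G' p)) (at p within {0..1} \<times> \<Omega>)"
    and G'h: "\<forall>p\<in>{0..1} \<times> \<Omega>. \<forall>q\<in>{0..1} \<times> \<Omega>. norm (G' p - G' q) \<le> KG * dhat p q powr \<alpha>"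
    using G_C1alpha by blast
  obtain ab where ab: "\<forall>w\<in>\<Omega>. norm w \<le> ab"
    using compact_imp_bounded[OF Omega_compact] unfolding bounded_iff by blast
  define L where "L = norm (G' (0, y0)) + \<bar>KG\<bar> * (2 + 2 * ab)"
  have ab0: "0 \<le> ab" using ab y0_in norm_ge_zero order_trans by blast
  have L0: "0 \<le> L" unfolding L_def using ab0 by simp
  have L_bd: "\<forall>p\<in>{0..1} \<times> \<Omega>. norm (G' p) \<le> L"
  proof
    fix p :: "real \<times> (real ^ 'N)" assume p: "p \<in> {0..1} \<times> \<Omega>"
    have q: "(0::real, y0) \<in> {0..1} \<times> \<Omega>" using y0_in by simp
    have dh0: "0 \<le> dhat p (0, y0)" by (simp add: dhat_def)
    have "dhat p (0, y0) \<le> 1 + 2 * ab"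
    proof -
      have "norm (snd p - y0) \<le> norm (snd p) + norm y0" by (rule norm_triangle_ineq4)
      also have "\<dots> \<le> ab + ab" using ab p y0_in by (intro add_mono) auto
      finally show ?thesis using p by (auto simp: dhat_def)
    qed
    then have dh: "dhat p (0, y0) powr \<alpha> \<le> 2 + 2 * ab"
      using powr_le_1plus[OF dh0 alpha] by simp
    have "norm (G' p) \<le> norm (G' (0, y0)) + norm (G' p - G' (0, y0))"
      by (rule norm_triangle_sub)
    also have "norm (G' p - G' (0, y0)) \<le> KG * dhat p (0, y0) powr \<alpha>" using G'h p q by blast
    also have "\<dots> \<le> \<bar>KG\<bar> * dhat p (0, y0) powr \<alpha>" by (rule mult_right_mono) auto
    also have "\<dots> \<le> \<bar>KG\<bar> * (2 + 2 * ab)" using dh by (rule mult_left_mono) simp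
    finally show "norm (G' p) \<le> L" unfolding L_def by simp
  qed
  have Glip: "\<forall>w\<in>\<Omega>. \<forall>s\<in>{0..1}. \<forall>t\<in>{0..1}. norm (G (s, w) - G (t, w)) \<le> L * \<bar>s - t\<bar>"
    using G_lip[OF G'd L_bd] by blast
  define M where "M = C0 * L * C0 / (1 - \<gamma>)"
  have M0: "0 \<le> M" unfolding M_def using C0 L0 gamma by simp
  define C1 where "C1 = K' * (C0 * C0) powr \<alpha> + Xi * (1 + M * C0)"
  have C10: "0 \<le> C1" unfolding C1_def using K'0 Xi0 M0 C0 by simp
  define C where "C = C1 + Xi + 1"
  have Cpos: "C > 0" unfolding C_def using C10 Xi0 by simp
  show ?thesis
  proof (intro exI[of _ C] conjI allI impI ballI Cpos)
    fix \<psi> :: "real \<times> (real ^ 'N) \<Rightarrow> real" and n :: nat and h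
    assume psi: "in_Cloc_hat \<alpha> F P \<Omega> \<psi>" and n: "1 \<le> n" and h: "h \<in> inv_branches_n F P n"
    define A where "A = Sup (hat_sup_set \<Omega> \<psi>)"
    define B where "B = Sup (hat_holder_set \<alpha> F P \<Omega> \<psi>)"
    have nA: "norm_Cloc_hat \<alpha> F P \<Omega> \<psi> = A + B" by (simp add: norm_Cloc_hat_def A_def B_def)
    obtain m where m: "n = Suc m" using n by (cases n) auto
    obtain h1 where h1: "h1 \<in> inv_branches F P" using h m by auto
    have psi_bd: "\<bar>\<psi> p\<bar> \<le> A" if "p \<in> {0<..<1} \<times> \<Omega>" for p
    proof -
      have "\<bar>\<psi> p\<bar> \<in> hat_sup_set \<Omega> \<psi>" unfolding hat_sup_set_def using that by blast
      then show ?thesis unfolding A_def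
        by (rule cSup_upper) (use psi in \<open>auto simp: in_Cloc_hat_def\<close>)
    qed
    have A0: "0 \<le> A" using psi_bd[of "(1/2, y0)"] y0_in by simp
    have psi_h: "\<bar>\<psi> (g x1, y1) - \<psi> (g x2, y2)\<bar> \<le> B * (\<bar>x1 - x2\<bar> powr \<alpha> + norm (y1 - y2))"
      if "g \<in> inv_branches F P" "x1 \<in> {0<..<1}" "x2 \<in> {0<..<1}" "y1 \<in> \<Omega>" "y2 \<in> \<Omega>"
         "(x1, y1) \<noteq> (x2, y2)" for g x1 x2 y1 y2
    proof -
      have den: "0 < \<bar>x1 - x2\<bar> powr \<alpha> + norm (y1 - y2)"
      proof (cases "x1 = x2")
        case True
        moreover have "y1 \<noteq> y2" using that True by auto
        ultimately show ?thesis by simp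
      next
        case False then show ?thesis by (simp add: add_pos_nonneg)
      qed
      have "\<bar>\<psi> (g x1, y1) - \<psi> (g x2, y2)\<bar> / (\<bar>x1 - x2\<bar> powr \<alpha> + norm (y1 - y2)) \<le> B"
      proof -
        have "\<bar>\<psi> (g x1, y1) - \<psi> (g x2, y2)\<bar> / (\<bar>x1 - x2\<bar> powr \<alpha> + norm (y1 - y2))
              \<in> hat_holder_set \<alpha> F P \<Omega> \<psi>" unfolding hat_holder_set_def using that by blast
        then show ?thesis unfolding B_def
          by (rule cSup_upper) (use psi in \<open>auto simp: in_Cloc_hat_def\<close>)
      qed
      then show ?thesis using den by (simp add: divide_le_eq mult.commute)
    qed
    have B0: "0 \<le> B"
    proof -
      have "\<bar>\<psi> (h1 (1/2), y0) - \<psi> (h1 (1/4), y0)\<bar> / (\<bar>1/2 - 1/4\<bar> powr \<alpha> + norm (y0 - y0))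
            \<in> hat_holder_set \<alpha> F P \<Omega> \<psi>"
        unfolding hat_holder_set_def using h1 y0_in
        by (intro CollectI exI[of _ h1] exI[of _ "1/2"] exI[of _ "1/4"] exI[of _ y0]) auto
      then have "\<bar>\<psi> (h1 (1/2), y0) - \<psi> (h1 (1/4), y0)\<bar> / (\<bar>1/2 - 1/4\<bar> powr \<alpha> + norm (y0 - y0)) \<le> B"
        unfolding B_def by (rule cSup_upper) (use psi in \<open>auto simp: in_Cloc_hat_def\<close>)
      moreover have "0 \<le> \<bar>\<psi> (h1 (1/2), y0) - \<psi> (h1 (1/4), y0)\<bar> / (\<bar>1/2 - 1/4\<bar> powr \<alpha> + norm (y0 - y0))"
        by simp
      ultimately show ?thesis by linarith
    qed
    define \<phi> where "\<phi> = (\<lambda>x. \<xi> (h x) * psi_n F G y0 \<psi> n (h x))"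
    define Y where "Y x = snd ((Fhat F G ^^ n) (h x, y0))" for x
    have phi_eq: "\<phi> x = \<xi> (h x) * \<psi> (x, Y x) \<and> Y x \<in> \<Omega>" if x: "x \<in> {0<..<1}" for x
    proof -
      obtain t where t: "t \<in> inv_branches_n F P (n - n)" "\<forall>z\<in>{0<..<1}. (F^^n) (h z) = t z"
        using Hn_tail[OF P_intervals h, of n] by auto
      have "t = id" using t(1) by simp
      then have f: "fst ((Fhat F G ^^ n) (h x, y0)) = x" using t(2) x fst_iter[where F=F and G=G] by simp
      then have e: "(Fhat F G ^^ n) (h x, y0) = (x, Y x)" unfolding Y_def by (simp add: prod_eq_iff)
      have hx: "h x \<in> {0<..<1}" using Hn_maps[OF P_intervals h x] .
      have "(Fhat F G ^^ n) (h x, y0) \<in> {0..1} \<times> \<Omega>"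
        by (rule iter_in[OF F_maps G_maps]) (use hx y0_in in auto)
      then have "Y x \<in> \<Omega>" using e by auto
      then show ?thesis using e unfolding \<phi>_def psi_n_def by simp
    qed
    have lipC0: "\<bar>k x - k y\<bar> \<le> C0 * \<bar>x - y\<bar>"
      if "k \<in> inv_branches_n F P j" "1 \<le> j" "x \<in> {0<..<1}" "y \<in> {0<..<1}" for k j x y
    proof -
      have "C0 * \<rho> ^ j \<le> C0" using C0 rho by (simp add: power_le_one)
      then have "\<forall>x\<in>{0<..<1}. k differentiable (at x) \<and> \<bar>deriv k x\<bar> \<le> C0"
        using H_n_contr that(1,2) by force
      then show ?thesis using lip_deriv that(3,4) by blast
    qed
    have Ylip: "norm (Y z1 - Y z2) \<le> M * \<bar>z1 - z2\<bar>" if "z1 \<in> {0<..<1}" "z2 \<in> {0<..<1}" for z1 z2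
      unfolding Y_def M_def
      by (rule Y_lip[OF P_intervals F_maps G_maps Glip L0 C0 gamma rho H_n_contr G_contr y0_in h that])
    have sup_elem: "r \<le> Xi * A" if rin: "r \<in> sup_set \<phi>" for r
    proof -
      obtain x where x: "x \<in> {0<..<1}" "r = \<bar>\<phi> x\<bar>" using rin unfolding sup_set_def by blast
      have hx: "h x \<in> {0<..<1}" using Hn_maps[OF P_intervals h x(1)] .
      have "\<bar>\<phi> x\<bar> = \<bar>\<xi> (h x)\<bar> * \<bar>\<psi> (x, Y x)\<bar>" using phi_eq[OF x(1)] by (simp add: abs_mult)
      also have "\<dots> \<le> Xi * A" using xi_bd hx psi_bd phi_eq[OF x(1)] x(1) Xi0
        by (intro mult_mono) auto
      finally show "r \<le> Xi * A" using x by simp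
    qed
    have sup_le: "Sup (sup_set \<phi>) \<le> Xi * A"
    proof (rule cSup_least)
      show "sup_set \<phi> \<noteq> {}" unfolding sup_set_def by (auto intro!: exI[of _ "1/2"])
    qed (rule sup_elem)
    have hold_elem: "\<bar>\<phi> (g x) - \<phi> (g y)\<bar> / \<bar>x - y\<bar> powr \<alpha> \<le> C1 * (A + B)"
      if g: "g \<in> inv_branches F P" and x: "x \<in> {0<..<1}" and y: "y \<in> {0<..<1}" and xy: "x \<noteq> y" for g x y
    proof -
      have g1: "g \<in> inv_branches_n F P 1" using g by (auto intro!: exI[of _ g] exI[of _ id])
      have gx: "g x \<in> {0<..<1}" and gy: "g y \<in> {0<..<1}" using Hn_maps[OF P_intervals g1] x y by auto
      have hgx: "h (g x) \<in> {0<..<1}" and hgy: "h (g y) \<in> {0<..<1}" using Hn_maps[OF P_intervals h] gx gy by auto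
      define e where "e = \<bar>x - y\<bar> powr \<alpha>"
      have e0: "0 < e" using xy by (simp add: e_def)
      have de: "\<bar>x - y\<bar> \<le> e" unfolding e_def
        by (rule powr_small_ge) (use x y alpha in auto)
      have gxy: "\<bar>g x - g y\<bar> \<le> C0 * \<bar>x - y\<bar>" using lipC0[OF g1 _ x y] by simp
      have hxy: "\<bar>h (g x) - h (g y)\<bar> \<le> C0 * (C0 * \<bar>x - y\<bar>)"
      proof -
        have "\<bar>h (g x) - h (g y)\<bar> \<le> C0 * \<bar>g x - g y\<bar>" using lipC0[OF h n gx gy] .
        also have "\<dots> \<le> C0 * (C0 * \<bar>x - y\<bar>)" using gxy C0 by (intro mult_left_mono) auto
        finally show ?thesis .
      qed
      have xi1: "\<bar>\<xi> (h (g x)) - \<xi> (h (g y))\<bar> \<le> K' * (C0 * C0) powr \<alpha> * e"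
      proof -
        have "\<bar>\<xi> (h (g x)) - \<xi> (h (g y))\<bar> \<le> K' * \<bar>h (g x) - h (g y)\<bar> powr \<alpha>"
          using xi_h hgx hgy by auto
        also have "\<dots> \<le> K' * (C0 * C0 * \<bar>x - y\<bar>) powr \<alpha>"
          using hxy alpha K'0 by (intro mult_left_mono powr_mono2) (auto simp: mult_ac)
        also have "(C0 * C0 * \<bar>x - y\<bar>) powr \<alpha> = (C0 * C0) powr \<alpha> * e"
          unfolding e_def using C0 by (simp add: powr_mult)
        finally show ?thesis by (simp add: mult_ac)
      qed
      have pe1: "\<phi> (g x) = \<xi> (h (g x)) * \<psi> (g x, Y (g x))" "Y (g x) \<in> \<Omega>" using phi_eq[OF gx] by auto
      have pe2: "\<phi> (g y) = \<xi> (h (g y)) * \<psi> (g y, Y (g y))" "Y (g y) \<in> \<Omega>" using phi_eq[OF gy] by auto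
      have gxgy: "g x \<noteq> g y"
      proof
        assume "g x = g y"
        then have "F (g x) = F (g y)" by simp
        moreover have "F (g x) = x" "F (g y) = y" using g x y unfolding inv_branches_def by auto
        ultimately show False using xy by simp
      qed
      have p1: "\<bar>\<psi> (g x, Y (g x))\<bar> \<le> A" using psi_bd gx pe1 by auto
      have Yd: "norm (Y (g x) - Y (g y)) \<le> M * C0 * e"
      proof -
        have "norm (Y (g x) - Y (g y)) \<le> M * \<bar>g x - g y\<bar>" using Ylip gx gy by blast
        also have "\<dots> \<le> M * (C0 * e)"
          using gxy de C0 M0 by (intro mult_left_mono) (auto intro: order_trans mult_left_mono)
        finally show ?thesis by (simp add: mult_ac)
      qed
      have p12: "\<bar>\<psi> (g x, Y (g x)) - \<psi> (g y, Y (g y))\<bar> \<le> B * (1 + M * C0) * e"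
      proof -
        have "\<bar>\<psi> (g x, Y (g x)) - \<psi> (g y, Y (g y))\<bar> \<le> B * (\<bar>x - y\<bar> powr \<alpha> + norm (Y (g x) - Y (g y)))"
          using psi_h[OF g x y pe1(2) pe2(2)] xy by auto
        also have "\<dots> \<le> B * (e + M * C0 * e)" using Yd B0 by (intro mult_left_mono) (auto simp: e_def)
        finally show ?thesis by (simp add: algebra_simps)
      qed
      have xi2: "\<bar>\<xi> (h (g y))\<bar> \<le> Xi" using xi_bd hgy by auto
      have "\<phi> (g x) - \<phi> (g y) = (\<xi> (h (g x)) - \<xi> (h (g y))) * \<psi> (g x, Y (g x))
              + \<xi> (h (g y)) * (\<psi> (g x, Y (g x)) - \<psi> (g y, Y (g y)))"
        using pe1 pe2 by (simp add: algebra_simps)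
      then have "\<bar>\<phi> (g x) - \<phi> (g y)\<bar> \<le> \<bar>\<xi> (h (g x)) - \<xi> (h (g y))\<bar> * \<bar>\<psi> (g x, Y (g x))\<bar>
              + \<bar>\<xi> (h (g y))\<bar> * \<bar>\<psi> (g x, Y (g x)) - \<psi> (g y, Y (g y))\<bar>"
        by (simp add: abs_mult[symmetric] abs_triangle_ineq)
      also have "\<dots> \<le> (K' * (C0 * C0) powr \<alpha> * e) * A + Xi * (B * (1 + M * C0) * e)"
        using xi1 p1 xi2 p12 A0 Xi0 by (intro add_mono mult_mono) auto
      also have "\<dots> = (K' * (C0 * C0) powr \<alpha> * A + Xi * (1 + M * C0) * B) * e" by (simp add: algebra_simps)
      also have "K' * (C0 * C0) powr \<alpha> * A + Xi * (1 + M * C0) * B \<le> C1 * (A + B)"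
      proof -
        have "K' * (C0 * C0) powr \<alpha> * A \<le> K' * (C0 * C0) powr \<alpha> * (A + B)"
          using K'0 B0 by (intro mult_left_mono) auto
        moreover have "Xi * (1 + M * C0) * B \<le> Xi * (1 + M * C0) * (A + B)"
          using Xi0 M0 C0 A0 by (intro mult_left_mono) auto
        ultimately show ?thesis unfolding C1_def by (simp add: algebra_simps)
      qed
      then have "(K' * (C0 * C0) powr \<alpha> * A + Xi * (1 + M * C0) * B) * e \<le> C1 * (A + B) * e"
        using e0 by (intro mult_right_mono) auto
      finally show ?thesis using e0 unfolding e_def by (simp add: divide_le_eq)
    qed
    have "\<bar>\<phi> (h1 (1/2)) - \<phi> (h1 (1/4))\<bar> / \<bar>1/2 - 1/4\<bar> powr \<alpha> \<in> holder_set \<alpha> F P \<phi>"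
      unfolding holder_set_def using h1
      by (intro CollectI exI[of _ h1] exI[of _ "1/2::real"] exI[of _ "1/4::real"]) auto
    then have hne: "holder_set \<alpha> F P \<phi> \<noteq> {}" by blast
    have hold_le: "Sup (holder_set \<alpha> F P \<phi>) \<le> C1 * (A + B)"
    proof (rule cSup_least[OF hne])
      fix r assume "r \<in> holder_set \<alpha> F P \<phi>"
      then show "r \<le> C1 * (A + B)" unfolding holder_set_def using hold_elem by auto
    qed
    have "in_Cloc \<alpha> F P \<phi>"
    proof -
      have "bdd_above (sup_set \<phi>)" using sup_elem by (rule bdd_aboveI)
      moreover have "bdd_above (holder_set \<alpha> F P \<phi>)"
        by (rule bdd_aboveI[where M="C1 * (A + B)"]) (auto simp: holder_set_def intro!: hold_elem)
      ultimately show ?thesis by (simp add: in_Cloc_def)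
    qed
    moreover have "norm_Cloc \<alpha> F P \<phi> \<le> C * norm_Cloc_hat \<alpha> F P \<Omega> \<psi>"
    proof -
      have "norm_Cloc \<alpha> F P \<phi> \<le> Xi * A + C1 * (A + B)"
        unfolding norm_Cloc_def using sup_le hold_le by simp
      also have "\<dots> \<le> C * (A + B)" unfolding C_def using Xi0 A0 B0 by (simp add: algebra_simps)
      finally show ?thesis using nA by simp
    qed
    ultimately show "in_Cloc \<alpha> F P (\<lambda>x. \<xi> (h x) * psi_n F G y0 \<psi> n (h x))"
      "norm_Cloc \<alpha> F P (\<lambda>x. \<xi> (h x) * psi_n F G y0 \<psi> n (h x)) \<le> C * norm_Cloc_hat \<alpha> F P \<Omega> \<psi>"
      unfolding \<phi>_def by auto
  qed
qed

end
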